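(* Let $T$ be a tree and $f,g$ proper 3-colorings of $T$. Then $$\operatorname{dist}_{\mathcal{C}_3(T)}(f,g)=\min_{h\in D(f,g)}\|h\|_1 .$$
   Context: Let $T$ be a finite tree with vertex set $V$ and edge set $E$. A proper 3-coloring of $T$ is a map $f\colon V\to\mathbb{Z}/3\mathbb{Z}$ with $f(u)\neq f(v)$ for every edge $uv\in E$. The 3-coloring graph $\mathcal{C}_3(T)$ has the proper 3-colorings as vertices, two colorings adjacent iff they differ at exactly one vertex. A labeling of $T$ is a map $h\colon V\to\mathbb{Z}$ with $|h(u)-h(v)|\le 1$ for every edge $uv\in E$, and $\|h\|_1=\sum_{v\in V}|h(v)|$. Given proper 3-colorings $f,g$, $D(f,g)$ is the set of labelings $h$ with $h(v)\equiv g(v)-f(v)\pmod 3$ for all $v\in V$. *)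

theory Defs
  imports Main "HOL-Library.Numeral_Type" "HOL-Library.Extended_Nat"
begin

definition simple_graph :: "'a set \<Rightarrow> ('a \<times> 'a) set \<Rightarrow> bool" where
  "simple_graph V E \<longleftrightarrow> finite V \<and> E \<subseteq> V \<times> V \<and> sym E \<and> (\<forall>v. (v, v) \<notin> E)"

definition connected_graph :: "'a set \<Rightarrow> ('a \<times> 'a) set \<Rightarrow> bool" where
  "connected_graph V E \<longleftrightarrow> (\<forall>u\<in>V. \<forall>v\<in>V. (u, v) \<in> E\<^sup>*)"

definition is_cycle :: "('a \<times> 'a) set \<Rightarrow> 'a list \<Rightarrow> bool" where
  "is_cycle E cs \<longleftrightarrow> length cs \<ge> 3 \<and> distinct cs
     \<and> (\<forall>i. Suc i < length cs \<longrightarrow> (cs ! i, cs ! Suc i) \<in> E)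
     \<and> (last cs, hd cs) \<in> E"

definition is_tree :: "'a set \<Rightarrow> ('a \<times> 'a) set \<Rightarrow> bool" where
  "is_tree V E \<longleftrightarrow> simple_graph V E \<and> V \<noteq> {} \<and> connected_graph V E
     \<and> \<not> (\<exists>cs. is_cycle E cs)"

text \<open>Proper 3-colorings with values in Z/3Z (type 3); extended by 0 outside V so that
  colorings of T correspond bijectively to these functions.\<close>
definition proper3 :: "'a set \<Rightarrow> ('a \<times> 'a) set \<Rightarrow> ('a \<Rightarrow> 3) \<Rightarrow> bool" where
  "proper3 V E f \<longleftrightarrow> (\<forall>(u, v)\<in>E. f u \<noteq> f v) \<and> (\<forall>v. v \<notin> V \<longrightarrow> f v = 0)"

definition col_adj :: "'a set \<Rightarrow> ('a \<times> 'a) set \<Rightarrow> ('a \<Rightarrow> 3) \<Rightarrow> ('a \<Rightarrow> 3) \<Rightarrow> bool" where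
  "col_adj V E f g \<longleftrightarrow> proper3 V E f \<and> proper3 V E g \<and> card {v\<in>V. f v \<noteq> g v} = 1"

text \<open>Graph distance in the 3-coloring graph (infinite if not connected).\<close>
definition col_dist :: "'a set \<Rightarrow> ('a \<times> 'a) set \<Rightarrow> ('a \<Rightarrow> 3) \<Rightarrow> ('a \<Rightarrow> 3) \<Rightarrow> enat" where
  "col_dist V E f g = (INF n \<in> {n. (col_adj V E ^^ n) f g}. enat n)"

definition labeling :: "'a set \<Rightarrow> ('a \<times> 'a) set \<Rightarrow> ('a \<Rightarrow> int) \<Rightarrow> bool" where
  "labeling V E h \<longleftrightarrow> (\<forall>(u, v)\<in>E. \<bar>h u - h v\<bar> \<le> 1)"

definition norm1 :: "'a set \<Rightarrow> ('a \<Rightarrow> int) \<Rightarrow> nat" where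
  "norm1 V h = nat (\<Sum>v\<in>V. \<bar>h v\<bar>)"

definition Dset :: "'a set \<Rightarrow> ('a \<times> 'a) set \<Rightarrow> ('a \<Rightarrow> 3) \<Rightarrow> ('a \<Rightarrow> 3) \<Rightarrow> ('a \<Rightarrow> int) set" where
  "Dset V E f g = {h. labeling V E h \<and> (\<forall>v\<in>V. (of_int (h v) :: 3) = g v - f v)}"

end

theory Submission imports Defs begin

lemma three_cases: "(z::3) = 0 \<or> z = 1 \<or> z = -1"
proof (cases z)
  case (of_int za)
  then have "za < 3" by simp
  with of_int have "za = 0 \<or> za = 1 \<or> za = 2" by arith
  then show ?thesis using of_int by auto
qed

lemma three_aux: "(Y::3) \<noteq> 0 \<Longrightarrow> Y - s \<noteq> 0 \<Longrightarrow> s \<noteq> 0 \<Longrightarrow> Y + s = 0"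
  using three_cases[of Y] three_cases[of s] by auto

lemma three_aux2: "(s::3) \<noteq> 0 \<Longrightarrow> s + s \<noteq> 0"
  using three_cases[of s] by auto

lemma nb_walk_cycle:
  fixes w :: "nat \<Rightarrow> 'a"
  assumes fin: "finite V" and inV: "\<And>k. w k \<in> V"
    and edge: "\<And>k. (w k, w (Suc k)) \<in> E"
    and nb: "\<And>k. w (Suc (Suc k)) \<noteq> w k"
    and irr: "\<And>v. (v, v) \<notin> E"
  shows "\<exists>cs. is_cycle E cs"
proof -
  have "\<not> inj w"
  proof
    assume "inj w"
    then have "infinite (range w)" using range_inj_infinite by blast
    moreover have "range w \<subseteq> V" using inV by auto
    ultimately show False using fin finite_subset by blast
  qed
  then obtain a b where ab: "a \<noteq> b" "w a = w b" unfolding inj_def by blast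
  define P where "P j \<longleftrightarrow> (\<exists>i<j. w i = w j)" for j
  have "P (max a b)"
  proof (cases "a < b")
    case True then show ?thesis unfolding P_def using ab by (auto simp: max_def)
  next
    case False then have "b < a" using ab by simp
    then show ?thesis unfolding P_def using ab by (auto simp: max_def intro!: exI[of _ b])
  qed
  define j where "j = (LEAST j. P j)"
  have Pj: "P j" unfolding j_def by (rule LeastI) fact
  have minj: "\<And>k. k < j \<Longrightarrow> \<not> P k" unfolding j_def by (rule not_less_Least)
  obtain i where ij: "i < j" "w i = w j" using Pj P_def by auto
  define cs where "cs = map w [i..<j]"
  have len: "length cs = j - i" by (simp add: cs_def)
  have "j \<noteq> Suc i" using edge[of i] irr ij by auto
  moreover have "j \<noteq> Suc (Suc i)" using nb[of i] ij by auto
  ultimately have len3: "length cs \<ge> 3" using len ij by auto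
  have inj: "inj_on w {i..<j}"
  proof (rule inj_onI)
    fix x y assume xy: "x \<in> {i..<j}" "y \<in> {i..<j}" "w x = w y"
    show "x = y"
    proof (rule ccontr)
      assume "x \<noteq> y"
      then have "P (max x y)"
      proof (cases "x < y")
        case True then show ?thesis unfolding P_def using xy by (auto simp: max_def)
      next
        case False then have "y < x" using \<open>x \<noteq> y\<close> by simp
        then show ?thesis unfolding P_def using xy by (auto simp: max_def intro!: exI[of _ y])
      qed
      moreover have "max x y < j" using xy by auto
      ultimately show False using minj by blast
    qed
  qed
  have dist: "distinct cs" unfolding cs_def using inj by (simp add: distinct_map)
  have cons: "\<forall>k. Suc k < length cs \<longrightarrow> (cs ! k, cs ! Suc k) \<in> E"
    using edge by (auto simp: cs_def)
  have l: "last cs = w (j - 1)" using len3 ij by (simp add: cs_def last_conv_nth)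
  have hd: "hd cs = w j" using len3 ij by (simp add: cs_def hd_conv_nth)
  have "(w (j - 1), w j) \<in> E" using edge[of "j - 1"] ij by simp
  then have "is_cycle E cs" unfolding is_cycle_def using len3 dist cons l hd by simp
  then show ?thesis by blast
qed

primrec walk :: "('a \<Rightarrow> 'a \<Rightarrow> 'a) \<Rightarrow> 'a \<times> 'a \<Rightarrow> nat \<Rightarrow> 'a \<times> 'a" where
  "walk nx s 0 = s"
| "walk nx s (Suc k) = (snd (walk nx s k), nx (fst (walk nx s k)) (snd (walk nx s k)))"

lemma exists_leaf:
  assumes fin: "finite S" and ne: "S \<noteq> {}" and irr: "\<And>v. (v,v) \<notin> E"
    and acyc: "\<not> (\<exists>cs. is_cycle E cs)"
  shows "\<exists>x\<in>S. \<forall>a\<in>S. \<forall>b\<in>S. (x,a) \<in> E \<longrightarrow> (x,b) \<in> E \<longrightarrow> a = b"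
proof (rule ccontr)
  assume "\<not> ?thesis"
  then have H: "\<And>x p. x \<in> S \<Longrightarrow> \<exists>u. u \<in> S \<and> (x,u) \<in> E \<and> u \<noteq> p" by blast
  define nx where "nx p x = (SOME u. u \<in> S \<and> (x,u) \<in> E \<and> u \<noteq> p)" for p x
  have nx: "nx p x \<in> S \<and> (x, nx p x) \<in> E \<and> nx p x \<noteq> p" if "x \<in> S" for x p
    unfolding nx_def using H[OF that, of p] by (rule someI_ex)
  obtain x0 where x0: "x0 \<in> S" using ne by auto
  define w where "w k = snd (walk nx (x0,x0) k)" for k
  have fst_w: "fst (walk nx (x0,x0) (Suc k)) = w k" for k by (simp add: w_def)
  have wS: "w (Suc k) = nx (fst (walk nx (x0,x0) k)) (w k)" for k by (simp add: w_def)
  have inS: "w k \<in> S" for k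
    by (induction k) (auto simp: x0 w_def nx)
  have edge: "(w k, w (Suc k)) \<in> E" for k using nx[OF inS[of k]] wS[of k] by simp
  have nb: "w (Suc (Suc k)) \<noteq> w k" for k
    using nx[OF inS[of "Suc k"]] wS[of "Suc k"] fst_w[of k] by simp
  show False using nb_walk_cycle[of S w E, OF fin inS edge nb irr] acyc by blast
qed


lemma exists_lab:
  assumes fin: "finite S" and irr: "\<And>v. (v,v) \<notin> E" and symE: "sym E"
    and acyc: "\<not> (\<exists>cs. is_cycle E cs)"
  shows "\<exists>h::'a\<Rightarrow>int. (\<forall>u\<in>S. \<forall>v\<in>S. (u,v) \<in> E \<longrightarrow> \<bar>h u - h v\<bar> \<le> 1)
           \<and> (\<forall>u\<in>S. (of_int (h u) :: 3) = d u)"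
  using fin
proof (induction "card S" arbitrary: S rule: less_induct)
  case less
  show ?case
  proof (cases "S = {}")
    case True then show ?thesis by auto
  next
    case False
    obtain x where x: "x \<in> S" "\<And>a b. a\<in>S \<Longrightarrow> b\<in>S \<Longrightarrow> (x,a)\<in>E \<Longrightarrow> (x,b)\<in>E \<Longrightarrow> a = b"
      using exists_leaf[OF less.prems False irr acyc] by blast
    have "card (S - {x}) < card S" by (rule card_Diff1_less[OF less.prems x(1)])
    moreover have "finite (S - {x})" using less.prems by simp
    ultimately obtain h where h1: "\<forall>u\<in>S-{x}. \<forall>v\<in>S-{x}. (u,v) \<in> E \<longrightarrow> \<bar>h u - h v\<bar> \<le> 1"
      and h2: "\<forall>u\<in>S-{x}. (of_int (h u)::3) = d u"
      using less.hyps by blast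
    define t where "t = (if \<exists>u\<in>S. (x,u)\<in>E then h (SOME u. u\<in>S \<and> (x,u)\<in>E) else 0)"
    obtain c where c: "c \<in> {t-1, t, t+1}" "(of_int c :: 3) = d x"
    proof -
      consider "d x - of_int t = 0" | "d x - of_int t = 1" | "d x - of_int t = -1"
        using three_cases by blast
      then show ?thesis
      proof cases
        case 1 then show ?thesis using that[of t] by simp
      next
        case 2 then have "(of_int (t+1) :: 3) = d x" by (simp add: diff_eq_eq)
        then show ?thesis using that[of "t+1"] by simp
      next
        case 3 then have "(of_int (t-1) :: 3) = d x" by (simp add: diff_eq_eq)
        then show ?thesis using that[of "t-1"] by simp
      qed
    qed
    define h' where "h' = h(x := c)"
    have key: "\<bar>h' x - h' v\<bar> \<le> 1" if "v \<in> S" "(x,v) \<in> E" for v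
    proof -
      define y where "y = (SOME u. u\<in>S \<and> (x,u)\<in>E)"
      have y: "y \<in> S \<and> (x,y) \<in> E" unfolding y_def using that by (metis (mono_tags, lifting) someI)
      have "v = y" using x(2)[of v y] that y by blast
      moreover have "v \<noteq> x" using that irr by auto
      moreover have "t = h y" unfolding t_def y_def using that by auto
      ultimately show ?thesis using c(1) by (auto simp: h'_def)
    qed
    show ?thesis
    proof (intro exI conjI ballI impI)
      fix u v assume uv: "u \<in> S" "v \<in> S" "(u,v) \<in> E"
      show "\<bar>h' u - h' v\<bar> \<le> 1"
      proof (cases "u = x")
        case True then show ?thesis using key uv by auto
      next
        case False
        show ?thesis
        proof (cases "v = x")
          case True
          have "(x,u) \<in> E" using uv True symE by (auto dest: symD)
          then show ?thesis using key[of u] uv True by (simp add: abs_minus_commute)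
        next
          case False
          then show ?thesis using h1 uv \<open>u \<noteq> x\<close> by (auto simp: h'_def)
        qed
      qed
    next
      fix u assume "u \<in> S"
      then show "(of_int (h' u) :: 3) = d u" using h2 c by (cases "u = x") (auto simp: h'_def)
    qed
  qed
qed

lemma lower:
  assumes sg: "simple_graph V E" and pg: "proper3 V E g"
  shows "proper3 V E f \<Longrightarrow> (col_adj V E ^^ n) f g \<Longrightarrow> \<exists>h\<in>Dset V E f g. norm1 V h \<le> n"
proof (induction n arbitrary: f)
  case 0
  then have "f = g" by simp
  then show ?case by (intro bexI[of _ "\<lambda>_. 0"]) (auto simp: Dset_def labeling_def norm1_def)
next
  case (Suc n)
  have fin: "finite V" and EV: "E \<subseteq> V \<times> V" and symE: "sym E" and irr: "\<And>v. (v,v) \<notin> E"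
    using sg by (auto simp: simple_graph_def)
  from Suc.prems(2) obtain f1 where a: "col_adj V E f f1" and r: "(col_adj V E ^^ n) f1 g"
    by (metis relpowp_Suc_E2)
  have pf1: "proper3 V E f1" using a col_adj_def by blast
  obtain h1 where h1: "h1 \<in> Dset V E f1 g" "norm1 V h1 \<le> n" using Suc.IH[OF pf1 r] by blast
  from a have "card {v\<in>V. f v \<noteq> f1 v} = 1" by (simp add: col_adj_def)
  then obtain v where v: "{w\<in>V. f w \<noteq> f1 w} = {v}" by (auto simp: card_1_singleton_iff)
  then have vV: "v \<in> V" and fv: "f v \<noteq> f1 v" and same: "\<And>w. w \<in> V \<Longrightarrow> w \<noteq> v \<Longrightarrow> f w = f1 w"
    by auto
  define \<sigma> :: int where "\<sigma> = (if f1 v - f v = 1 then 1 else -1)"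
  have sig: "\<sigma> = 1 \<or> \<sigma> = -1" unfolding \<sigma>_def by auto
  have s: "f1 v = f v + of_int \<sigma>"
    using three_cases[of "f1 v - f v"] fv unfolding \<sigma>_def by (auto simp: diff_eq_eq)
  define h where "h = h1(v := h1 v + \<sigma>)"
  have lab1: "\<bar>h1 a - h1 b\<bar> \<le> 1" if "(a,b) \<in> E" for a b
    using h1(1) that by (auto simp: Dset_def labeling_def)
  have cong1: "(of_int (h1 a) :: 3) = g a - f1 a" if "a \<in> V" for a
    using h1(1) that by (auto simp: Dset_def)
  have keyv: "\<bar>h v - h b\<bar> \<le> 1" if "(v,b) \<in> E" for b
  proof (rule ccontr)
    assume nle: "\<not> ?thesis"
    have bv: "b \<noteq> v" using that irr by auto
    have bV: "b \<in> V" using that EV by auto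
    have "h1 v - h1 b = \<sigma>" using nle lab1[OF that] sig bv unfolding h_def by auto
    then have d: "(of_int (h1 v) :: 3) - of_int (h1 b) = of_int \<sigma>" by (metis of_int_diff)
    have Y: "f1 v - f1 b \<noteq> 0" using pf1 that by (auto simp: proper3_def)
    have "f v - f b \<noteq> 0" using Suc.prems(1) that by (auto simp: proper3_def)
    then have Y2: "(f1 v - f1 b) - of_int \<sigma> \<noteq> 0" using s same[OF bV bv] by (simp add: algebra_simps)
    have "(of_int \<sigma> :: 3) \<noteq> 0" using sig by auto
    then have "(f1 v - f1 b) + of_int \<sigma> = 0" using three_aux Y Y2 by blast
    moreover have "g v - g b = (f1 v - f1 b) + of_int \<sigma>"
    proof -
      have gv: "g v = f1 v + of_int (h1 v)" using cong1[OF vV] by (simp add: eq_diff_eq add.commute)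
      have gb: "g b = f1 b + of_int (h1 b)" using cong1[OF bV] by (simp add: eq_diff_eq add.commute)
      have "g v - g b = (f1 v - f1 b) + ((of_int (h1 v) :: 3) - of_int (h1 b))"
        by (simp add: gv gb algebra_simps)
      then show ?thesis using d by simp
    qed
    ultimately have "g v = g b" by simp
    then show False using pg that by (auto simp: proper3_def)
  qed
  show ?case
  proof (rule bexI[of _ h])
    have "(\<Sum>w\<in>V. \<bar>h w\<bar>) = \<bar>h v\<bar> + (\<Sum>w\<in>V-{v}. \<bar>h w\<bar>)" using fin vV by (rule sum.remove)
    also have "(\<Sum>w\<in>V-{v}. \<bar>h w\<bar>) = (\<Sum>w\<in>V-{v}. \<bar>h1 w\<bar>)" by (rule sum.cong) (auto simp: h_def)
    also have "\<bar>h v\<bar> \<le> \<bar>h1 v\<bar> + 1" using sig by (auto simp: h_def)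
    finally have "(\<Sum>w\<in>V. \<bar>h w\<bar>) \<le> \<bar>h1 v\<bar> + (\<Sum>w\<in>V-{v}. \<bar>h1 w\<bar>) + 1" by simp
    also have "\<bar>h1 v\<bar> + (\<Sum>w\<in>V-{v}. \<bar>h1 w\<bar>) = (\<Sum>w\<in>V. \<bar>h1 w\<bar>)"
      using fin vV by (rule sum.remove[symmetric])
    finally have le: "(\<Sum>w\<in>V. \<bar>h w\<bar>) \<le> (\<Sum>w\<in>V. \<bar>h1 w\<bar>) + 1" .
    have "(\<Sum>w\<in>V. \<bar>h1 w\<bar>) \<le> int n" using h1(2) unfolding norm1_def by linarith
    then show "norm1 V h \<le> Suc n" using le unfolding norm1_def by linarith
  next
    show "h \<in> Dset V E f g"
      unfolding Dset_def labeling_def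
    proof (intro CollectI conjI ballI)
      fix p assume "p \<in> E"
      then obtain a b where ab: "p = (a,b)" "(a,b) \<in> E" by (cases p) auto
      have "\<bar>h a - h b\<bar> \<le> 1"
      proof (cases "a = v")
        case True then show ?thesis using keyv ab by auto
      next
        case False
        show ?thesis
        proof (cases "b = v")
          case True
          have "(v,a) \<in> E" using ab True symE by (auto dest: symD)
          then show ?thesis using keyv[of a] True by (simp add: abs_minus_commute)
        next
          case False then show ?thesis using lab1[OF ab(2)] \<open>a \<noteq> v\<close> by (simp add: h_def)
        qed
      qed
      then show "case p of (u, w) \<Rightarrow> \<bar>h u - h w\<bar> \<le> 1" using ab by simp
    next
      fix w assume wV: "w \<in> V"
      show "(of_int (h w) :: 3) = g w - f w"
      proof (cases "w = v")
        case True then show ?thesis using cong1[OF vV] s by (simp add: h_def algebra_simps)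
      next
        case False then show ?thesis using cong1[OF wV] same[OF wV] by (simp add: h_def)
      qed
    qed
  qed
qed


lemma step:
  assumes tree: "is_tree V E" and pf: "proper3 V E f" and pg: "proper3 V E g"
    and hD: "h \<in> Dset V E f g" and sig: "\<sigma> = 1 \<or> \<sigma> = -1" and pos: "\<exists>v\<in>V. \<sigma> * h v > 0"
  shows "\<exists>f' h'. col_adj V E f f' \<and> h' \<in> Dset V E f' g \<and> norm1 V h' + 1 = norm1 V h"
proof -
  have fin: "finite V" and EV: "E \<subseteq> V \<times> V" and symE: "sym E" and irr: "\<And>v. (v,v) \<notin> E"
    and acyc: "\<not> (\<exists>cs. is_cycle E cs)"
    using tree by (auto simp: is_tree_def simple_graph_def)
  define s :: 3 where "s = of_int \<sigma>"
  have s0: "s \<noteq> 0" using sig by (auto simp: s_def)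
  have ss: "s + s \<noteq> 0" using three_aux2[OF s0] .
  have lab: "\<bar>h a - h b\<bar> \<le> 1" if "(a,b) \<in> E" for a b
    using hD that by (auto simp: Dset_def labeling_def)
  have cong: "(of_int (h a) :: 3) = g a - f a" if "a \<in> V" for a
    using hD that by (auto simp: Dset_def)
  define M where "M = Max ((\<lambda>v. \<sigma> * h v) ` V)"
  have Mge: "\<sigma> * h v \<le> M" if "v \<in> V" for v unfolding M_def using fin that by (intro Max_ge) auto
  have Vne: "V \<noteq> {}" using pos by auto
  have "M \<in> (\<lambda>v. \<sigma> * h v) ` V" unfolding M_def using fin Vne by (intro Max_in) auto
  then obtain vm where vm: "vm \<in> V" "\<sigma> * h vm = M" by auto
  have Mpos: "M > 0" using pos Mge by force
  define S where "S = {v\<in>V. \<sigma> * h v = M}"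
  have finS: "finite S" using fin by (simp add: S_def)
  have "\<exists>v\<in>S. \<forall>u. (v,u) \<in> E \<longrightarrow> f u \<noteq> f v + s"
  proof (rule ccontr)
    assume "\<not> ?thesis"
    then have bl: "\<And>v. v \<in> S \<Longrightarrow> \<exists>u. (v,u) \<in> E \<and> f u = f v + s" by blast
    have bl2: "\<exists>u. u \<in> S \<and> (v,u) \<in> E \<and> f u = f v + s" if vS: "v \<in> S" for v
    proof -
      obtain u where u: "(v,u) \<in> E" "f u = f v + s" using bl[OF vS] by blast
      have uV: "u \<in> V" and vV: "v \<in> V" using u EV by auto
      have "u \<in> S"
      proof (rule ccontr)
        assume "u \<notin> S"
        then have "\<sigma> * h u \<noteq> M" using uV by (auto simp: S_def)
        moreover have "\<sigma> * h u \<le> M" using Mge uV by auto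
        moreover have "\<sigma> * h v = M" using vS by (auto simp: S_def)
        moreover note lab[OF u(1)]
        ultimately have "h u = h v - \<sigma>" using sig by auto
        then have "(of_int (h u) :: 3) = of_int (h v) - s" by (simp add: s_def)
        then have "g u - f u = g v - f v - s" using cong uV vV by simp
        then have "g u = g v" using u(2) by (simp add: algebra_simps)
        then show False using pg u(1) by (auto simp: proper3_def)
      qed
      then show ?thesis using u by blast
    qed
    define nx where "nx v = (SOME u. u \<in> S \<and> (v,u) \<in> E \<and> f u = f v + s)" for v
    have nx: "nx v \<in> S \<and> (v, nx v) \<in> E \<and> f (nx v) = f v + s" if "v \<in> S" for v
      unfolding nx_def using bl2[OF that] by (rule someI_ex)
    define w where "w k = (nx ^^ k) vm" for k
    have vmS: "vm \<in> S" using vm by (simp add: S_def)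
    have inS: "w k \<in> S" for k by (induction k) (auto simp: w_def vmS nx)
    have wS: "w (Suc k) = nx (w k)" for k by (simp add: w_def)
    have edge: "(w k, w (Suc k)) \<in> E" for k using nx[OF inS[of k]] wS by simp
    have fw: "f (w (Suc k)) = f (w k) + s" for k using nx[OF inS[of k]] wS by simp
    have nb: "w (Suc (Suc k)) \<noteq> w k" for k
    proof
      assume "w (Suc (Suc k)) = w k"
      then have "f (w k) + s + s = f (w k)" using fw[of k] fw[of "Suc k"] by simp
      then show False using ss by (simp add: add.assoc)
    qed
    show False using nb_walk_cycle[of S w E, OF finS inS edge nb irr] acyc by blast
  qed
  then obtain v where vS: "v \<in> S" and free: "\<And>u. (v,u) \<in> E \<Longrightarrow> f u \<noteq> f v + s" by blast
  have vV: "v \<in> V" and hv: "\<sigma> * h v = M" using vS by (auto simp: S_def)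
  define f' where "f' = f(v := f v + s)"
  define h' where "h' = h(v := h v - \<sigma>)"
  have pf': "proper3 V E f'"
    unfolding proper3_def
  proof (intro conjI allI impI ballI)
    fix p assume "p \<in> E"
    then obtain a b where ab: "p = (a,b)" "(a,b) \<in> E" by (cases p) auto
    have "f' a \<noteq> f' b"
    proof (cases "a = v")
      case True
      then have "b \<noteq> v" using ab irr by auto
      then show ?thesis using free[of b] ab True by (auto simp: f'_def)
    next
      case False
      show ?thesis
      proof (cases "b = v")
        case True
        have "(v,a) \<in> E" using ab True symE by (auto dest: symD)
        then show ?thesis using free[of a] True \<open>a \<noteq> v\<close> by (auto simp: f'_def)
      next
        case False then show ?thesis using pf ab \<open>a \<noteq> v\<close> by (auto simp: f'_def proper3_def)
      qed
    qed
    then show "case p of (u, w) \<Rightarrow> f' u \<noteq> f' w" using ab by simp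
  next
    fix a assume "a \<notin> V"
    then show "f' a = 0" using pf vV by (auto simp: f'_def proper3_def)
  qed
  have "{w\<in>V. f w \<noteq> f' w} = {v}" using vV s0 by (auto simp: f'_def)
  then have adj: "col_adj V E f f'" using pf pf' by (simp add: col_adj_def)
  have keyv: "\<bar>h' v - h' b\<bar> \<le> 1" if "(v,b) \<in> E" for b
  proof -
    have bv: "b \<noteq> v" using that irr by auto
    have bV: "b \<in> V" using that EV by auto
    have "\<sigma> * h b \<le> \<sigma> * h v" using Mge[OF bV] hv by simp
    then show ?thesis using lab[OF that] sig bv by (auto simp: h'_def)
  qed
  have hD': "h' \<in> Dset V E f' g"
    unfolding Dset_def labeling_def
  proof (intro CollectI conjI ballI)
    fix p assume "p \<in> E"
    then obtain a b where ab: "p = (a,b)" "(a,b) \<in> E" by (cases p) auto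
    have "\<bar>h' a - h' b\<bar> \<le> 1"
    proof (cases "a = v")
      case True then show ?thesis using keyv ab by auto
    next
      case False
      show ?thesis
      proof (cases "b = v")
        case True
        have "(v,a) \<in> E" using ab True symE by (auto dest: symD)
        then show ?thesis using keyv[of a] True by (simp add: abs_minus_commute)
      next
        case False then show ?thesis using lab[OF ab(2)] \<open>a \<noteq> v\<close> by (simp add: h'_def)
      qed
    qed
    then show "case p of (u, w) \<Rightarrow> \<bar>h' u - h' w\<bar> \<le> 1" using ab by simp
  next
    fix w assume wV: "w \<in> V"
    show "(of_int (h' w) :: 3) = g w - f' w"
    proof (cases "w = v")
      case True then show ?thesis using cong[OF vV] by (simp add: h'_def f'_def s_def algebra_simps)
    next
      case False then show ?thesis using cong[OF wV] by (simp add: h'_def f'_def)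
    qed
  qed
  have "(\<Sum>w\<in>V. \<bar>h' w\<bar>) = \<bar>h' v\<bar> + (\<Sum>w\<in>V-{v}. \<bar>h' w\<bar>)" using fin vV by (rule sum.remove)
  also have "(\<Sum>w\<in>V-{v}. \<bar>h' w\<bar>) = (\<Sum>w\<in>V-{v}. \<bar>h w\<bar>)" by (rule sum.cong) (auto simp: h'_def)
  also have "\<bar>h' v\<bar> = \<bar>h v\<bar> - 1" using sig hv Mpos by (auto simp: h'_def)
  finally have "(\<Sum>w\<in>V. \<bar>h' w\<bar>) + 1 = \<bar>h v\<bar> + (\<Sum>w\<in>V-{v}. \<bar>h w\<bar>)" by simp
  also have "\<bar>h v\<bar> + (\<Sum>w\<in>V-{v}. \<bar>h w\<bar>) = (\<Sum>w\<in>V. \<bar>h w\<bar>)"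
    using fin vV by (rule sum.remove[symmetric])
  finally have eq: "(\<Sum>w\<in>V. \<bar>h' w\<bar>) + 1 = (\<Sum>w\<in>V. \<bar>h w\<bar>)" .
  have "0 \<le> (\<Sum>w\<in>V. \<bar>h' w\<bar>)" by (rule sum_nonneg) simp
  then have "norm1 V h' + 1 = norm1 V h" unfolding norm1_def using eq by linarith
  then show ?thesis using adj hD' by blast
qed

lemma upper:
  assumes tree: "is_tree V E" and pg: "proper3 V E g"
  shows "proper3 V E f \<Longrightarrow> h \<in> Dset V E f g \<Longrightarrow> norm1 V h = n \<Longrightarrow> (col_adj V E ^^ n) f g"
proof (induction n arbitrary: f h)
  case 0
  have fin: "finite V" using tree by (auto simp: is_tree_def simple_graph_def)
  have "(\<Sum>w\<in>V. \<bar>h w\<bar>) \<le> 0" using 0 by (simp add: norm1_def)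
  then have "\<forall>w\<in>V. \<bar>h w\<bar> = 0" using sum_nonneg_eq_0_iff[OF fin, of "\<lambda>w. \<bar>h w\<bar>"]
    by (simp add: sum_nonneg order_antisym)
  then have "\<forall>w\<in>V. f w = g w" using 0(2) by (auto simp: Dset_def)
  moreover have "\<forall>w. w \<notin> V \<longrightarrow> f w = g w" using 0(1) pg by (simp add: proper3_def)
  ultimately have "f = g" by blast
  then show ?case by simp
next
  case (Suc n)
  have "\<exists>v\<in>V. h v \<noteq> 0"
  proof (rule ccontr)
    assume "\<not> ?thesis"
    then have "norm1 V h = 0" by (simp add: norm1_def)
    then show False using Suc.prems(3) by simp
  qed
  then obtain v where v: "v \<in> V" "h v \<noteq> 0" by blast
  define \<sigma> :: int where "\<sigma> = (if h v > 0 then 1 else -1)"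
  have sig: "\<sigma> = 1 \<or> \<sigma> = -1" by (simp add: \<sigma>_def)
  have pos: "\<exists>v\<in>V. \<sigma> * h v > 0" using v by (intro bexI[of _ v]) (auto simp: \<sigma>_def)
  obtain f' h' where st: "col_adj V E f f'" "h' \<in> Dset V E f' g" "norm1 V h' + 1 = norm1 V h"
    using step[OF tree Suc.prems(1) pg Suc.prems(2) sig pos] by blast
  have pf': "proper3 V E f'" using st(1) by (simp add: col_adj_def)
  have r: "(col_adj V E ^^ n) f' g" using Suc.IH[OF pf' st(2)] st(3) Suc.prems(3) by simp
  show ?case by (rule relpowp_Suc_I2[OF st(1) r])
qed

theorem mainTheorem6:
  fixes V :: "'a set" and E :: "('a \<times> 'a) set" and f g :: "'a \<Rightarrow> 3"
  assumes "is_tree V E" and "proper3 V E f" and "proper3 V E g"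
  shows "col_dist V E f g = enat (INF h \<in> Dset V E f g. norm1 V h)"
proof -
  have fin: "finite V" and EV: "E \<subseteq> V \<times> V" and symE: "sym E" and irr: "\<And>v. (v,v) \<notin> E"
    and acyc: "\<not> (\<exists>cs. is_cycle E cs)" and sg: "simple_graph V E"
    using assms(1) by (auto simp: is_tree_def simple_graph_def)
  obtain h0 where h0a: "\<forall>u\<in>V. \<forall>v\<in>V. (u,v) \<in> E \<longrightarrow> \<bar>h0 u - h0 v\<bar> \<le> 1"
    and h0b: "\<forall>u\<in>V. (of_int (h0 u) :: 3) = g u - f u"
    using exists_lab[OF fin irr symE acyc, of "\<lambda>u. g u - f u"] by blast
  have "h0 \<in> Dset V E f g" using h0a h0b EV by (auto simp: Dset_def labeling_def)
  then have Dne: "Dset V E f g \<noteq> {}" by blast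
  define m where "m = (INF h \<in> Dset V E f g. norm1 V h)"
  have "m \<in> norm1 V ` Dset V E f g" unfolding m_def using Dne by (intro Inf_nat_def1) auto
  then obtain hm where hm: "hm \<in> Dset V E f g" "norm1 V hm = m" by auto
  have "(col_adj V E ^^ m) f g" using upper[OF assms(1) assms(3) assms(2) hm] .
  then have le1: "col_dist V E f g \<le> enat m" unfolding col_dist_def by (intro INF_lower2[of m]) auto
  have le2: "enat m \<le> col_dist V E f g" unfolding col_dist_def
  proof (rule INF_greatest)
    fix n assume "n \<in> {n. (col_adj V E ^^ n) f g}"
    then obtain h where h: "h \<in> Dset V E f g" "norm1 V h \<le> n"
      using lower[OF sg assms(3) assms(2)] by blast
    have "m \<le> norm1 V h" unfolding m_def using h(1) by (intro cINF_lower) auto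
    then show "enat m \<le> enat n" using h(2) by simp
  qed
  show ?thesis using le1 le2 by (simp add: m_def)
qed

end
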